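(* Let $\Gamma$ be a typing environment, $\sigma$ a channel state and $P$ a process. If the configuration $\sigma\triangleright P$ is well-typed, $\Gamma\vdash\sigma\triangleright P$, then $\sigma\triangleright P$ has no error reduction, i.e., $\sigma\triangleright P\not\to^{\mathrm{err}}$.
   Context: Syntax (π-calculus with allocation). Channel names $c,d\in\mathcal N$, variables $x,y$, identifiers $u,v$ ranging over both, process variables $X$. Processes: $P,Q ::= u!\langle\vec v\rangle.P \mid u?(\vec x).P \mid \mathbf 0 \mid \mathsf{if}\ u=v\ \mathsf{then}\ P\ \mathsf{else}\ Q \mid \mathsf{rec}\,X.P \mid X \mid P\mid Q \mid (\nu c{:}s)P \mid \mathsf{alloc}\,x.P \mid \mathsf{free}\,u.P$, where $s\in\{\top,\bot\}$ (allocated/deallocated). Input binds $\vec x$, $\mathsf{alloc}$ binds $x$, $(\nu c{:}s)$ binds $c$, $\mathsf{rec}$ binds $X$. A channel state is a finite partial map $\sigma$ from channel names to $\{\top,\bot\}$; a configuration $\sigma\triangleright P$ requires the free names of $P$ to lie in $\mathrm{dom}(\sigma)$; it is closed if $P$ has no free variables. Contexts: $\mathcal C ::= [-]\mid \mathcal C\mid P\mid P\mid\mathcal C\mid (\nu c)\mathcal C$, applied to configurations by $[\sigma\triangleright P]=\sigma\triangleright P$; if $\mathcal C[\sigma\triangleright P]=\sigma'\triangleright P'$ then $(\mathcal C\mid Q)[\sigma\triangleright P]=\sigma'\triangleright(P'\mid Q)$, $(Q\mid\mathcal C)[\sigma\triangleright P]=\sigma'\triangleright(Q\mid P')$; and if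 $\mathcal C[\sigma\triangleright P]=\sigma',c{:}s\triangleright P'$ then $((\nu c)\mathcal C)[\sigma\triangleright P]=\sigma'\triangleright(\nu c{:}s)P'$. $\equiv$ is a standard π-calculus structural equivalence. Error reduction $\to^{\mathrm{err}}$ is the least relation on configurations closed under contexts (if $\sigma\triangleright P\to^{\mathrm{err}}$ then $\mathcal C[\sigma\triangleright P]\to^{\mathrm{err}}$) satisfying: $\sigma\triangleright c!\langle\vec d\rangle.P\mid c?(\vec x).Q\to^{\mathrm{err}}$ if $|\vec d|\ne|\vec x|$; $\sigma\triangleright c!\langle\vec d\rangle.P\to^{\mathrm{err}}$ if $\sigma(c)=\bot$; $\sigma\triangleright c?(\vec x).Q\to^{\mathrm{err}}$ if $\sigma(c)=\bot$; and $\sigma\triangleright P\to^{\mathrm{err}}$ if $P\equiv Q$ and $\sigma\triangleright Q\to^{\mathrm{err}}$. Types: $T::=[T_1,\dots,T_n]^a\mid\mathsf{Proc}$, attributes $a::=\mathsf{aff}\mid\mathsf{un}\mid\bullet_i$ ($i\in\mathbb N$; $\bullet_i$ = unique after $i$ steps). Typing environments are finite multisets of assumptions $u:T$ or $X:\mathsf{Proc}$. Decrement: $\Gamma,u:[\vec T]^{a-1}$ is $\Gamma$ if $a=\mathsf{aff}$, $\Gamma,u:[\vec T]^{\mathsf{un}}$ if $a=\mathsf{un}$, $\Gamma,u:[\vec T]^{\bullet_i}$ if $a=\bullet_{i+1}$. Splitting: $[\vec T]^{\mathsf{un}}=[\vec T]^{\mathsf{un}}\circ[\vec T]^{\mathsf{un}}$,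 $\mathsf{Proc}=\mathsf{Proc}\circ\mathsf{Proc}$, $[\vec T]^{\bullet_i}=[\vec T]^{\mathsf{aff}}\circ[\vec T]^{\bullet_{i+1}}$. Subtyping rules: $\bullet_i\le\bullet_{i+1}$, $\bullet_{i+1}\le\mathsf{un}$, $\mathsf{un}\le\mathsf{aff}$, $[\vec T]^{a_1}\le[\vec T]^{a_2}$ if $a_1\le a_2$. The judgement $\Gamma\vdash P$ is inductively defined by (bound variables fresh, commas denote multiset union): if $\Gamma,u:[\vec T]^{a-1},\vec x:\vec T\vdash P$ then $\Gamma,u:[\vec T]^a\vdash u?(\vec x).P$; if $\Gamma,u:[\vec T]^{a-1}\vdash P$ then $\Gamma,u:[\vec T]^a,\vec v:\vec T\vdash u!\langle\vec v\rangle.P$; if $\Gamma_1\vdash P$ and $\Gamma_2\vdash Q$ then $\Gamma_1,\Gamma_2\vdash P\mid Q$; if $u,v$ occur in $\Gamma$, $\Gamma\vdash P$ and $\Gamma\vdash Q$ then $\Gamma\vdash\mathsf{if}\ u=v\ \mathsf{then}\ P\ \mathsf{else}\ Q$; if $\Gamma^{\mathsf{un}},X:\mathsf{Proc}\vdash P$ then $\Gamma^{\mathsf{un}}\vdash\mathsf{rec}\,X.P$, where $\Gamma^{\mathsf{un}}$ contains only unrestricted assumptions; $X:\mathsf{Proc}\vdash X$; if $\Gamma,x:[\vec T]^{\bullet_0}\vdash P$ then $\Gamma\vdash\mathsf{alloc}\,x.P$; if $\Gamma\vdash P$ then $\Gamma,u:[\vec T]^{\bullet_0}\vdash\mathsf{free}\,u.P$;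 $\emptyset\vdash\mathbf 0$; if $\Gamma,c:T\vdash P$ then $\Gamma\vdash(\nu c{:}\top)P$; if $\Gamma\vdash P$ then $\Gamma\vdash(\nu c{:}\bot)P$; and the structural rules: if $T=T_1\circ T_2$ and $\Gamma,u:T_1,u:T_2\vdash P$ then $\Gamma,u:T\vdash P$; if $\Gamma\vdash P$ then $\Gamma,u:T\vdash P$; if $\Gamma,u:T_2\vdash P$ and $T_1\le T_2$ then $\Gamma,u:T_1\vdash P$; if $\Gamma,u:[\vec T_2]^{\bullet_0}\vdash P$ then $\Gamma,u:[\vec T_1]^{\bullet_0}\vdash P$. Configuration typing: $\Gamma\vdash\sigma\triangleright P$ holds iff $\sigma(c)=\top$ for every channel name $c\in\mathrm{dom}(\Gamma)$, $\Gamma\vdash P$, and $\Gamma$ is a partial function. *)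

theory Defs
  imports Main "HOL-Library.Multiset"
begin

type_synonym name = nat
type_synonym var = nat
type_synonym pvar = nat

datatype ident = Nm name | Vr var

datatype chst = Top | Bot   \<comment> \<open>allocated / deallocated\<close>

datatype proc =
    Out ident "ident list" proc
  | Inp ident "var list" proc
  | Nil
  | Cond ident ident proc proc
  | Rec pvar proc
  | PV pvar
  | Par proc proc
  | Res name chst proc
  | Alloc var proc
  | Free ident proc

type_synonym cstate = "name \<Rightarrow> chst option"

fun idn :: "ident \<Rightarrow> name set" where
  "idn (Nm c) = {c}" | "idn (Vr x) = {}"

fun idv :: "ident \<Rightarrow> var set" where
  "idv (Nm c) = {}" | "idv (Vr x) = {x}"

primrec fn :: "proc \<Rightarrow> name set" where
  "fn (Out u vs P) = idn u \<union> \<Union>(idn ` set vs) \<union> fn P"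
| "fn (Inp u xs P) = idn u \<union> fn P"
| "fn Nil = {}"
| "fn (Cond u v P Q) = idn u \<union> idn v \<union> fn P \<union> fn Q"
| "fn (Rec X P) = fn P"
| "fn (PV X) = {}"
| "fn (Par P Q) = fn P \<union> fn Q"
| "fn (Res c s P) = fn P - {c}"
| "fn (Alloc x P) = fn P"
| "fn (Free u P) = idn u \<union> fn P"

primrec fv :: "proc \<Rightarrow> var set" where
  "fv (Out u vs P) = idv u \<union> \<Union>(idv ` set vs) \<union> fv P"
| "fv (Inp u xs P) = idv u \<union> (fv P - set xs)"
| "fv Nil = {}"
| "fv (Cond u v P Q) = idv u \<union> idv v \<union> fv P \<union> fv Q"
| "fv (Rec X P) = fv P"
| "fv (PV X) = {}"
| "fv (Par P Q) = fv P \<union> fv Q"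
| "fv (Res c s P) = fv P"
| "fv (Alloc x P) = fv P - {x}"
| "fv (Free u P) = idv u \<union> fv P"

primrec fpv :: "proc \<Rightarrow> pvar set" where
  "fpv (Out u vs P) = fpv P"
| "fpv (Inp u xs P) = fpv P"
| "fpv Nil = {}"
| "fpv (Cond u v P Q) = fpv P \<union> fpv Q"
| "fpv (Rec X P) = fpv P - {X}"
| "fpv (PV X) = {X}"
| "fpv (Par P Q) = fpv P \<union> fpv Q"
| "fpv (Res c s P) = fpv P"
| "fpv (Alloc x P) = fpv P"
| "fpv (Free u P) = fpv P"

primrec bn :: "proc \<Rightarrow> name set" where
  "bn (Out u vs P) = bn P"
| "bn (Inp u xs P) = bn P"
| "bn Nil = {}"
| "bn (Cond u v P Q) = bn P \<union> bn Q"
| "bn (Rec X P) = bn P"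
| "bn (PV X) = {}"
| "bn (Par P Q) = bn P \<union> bn Q"
| "bn (Res c s P) = insert c (bn P)"
| "bn (Alloc x P) = bn P"
| "bn (Free u P) = bn P"

primrec bv :: "proc \<Rightarrow> var set" where
  "bv (Out u vs P) = bv P"
| "bv (Inp u xs P) = set xs \<union> bv P"
| "bv Nil = {}"
| "bv (Cond u v P Q) = bv P \<union> bv Q"
| "bv (Rec X P) = bv P"
| "bv (PV X) = {}"
| "bv (Par P Q) = bv P \<union> bv Q"
| "bv (Res c s P) = bv P"
| "bv (Alloc x P) = insert x (bv P)"
| "bv (Free u P) = bv P"

primrec bpv :: "proc \<Rightarrow> pvar set" where
  "bpv (Out u vs P) = bpv P"
| "bpv (Inp u xs P) = bpv P"
| "bpv Nil = {}"
| "bpv (Cond u v P Q) = bpv P \<union> bpv Q"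
| "bpv (Rec X P) = insert X (bpv P)"
| "bpv (PV X) = {}"
| "bpv (Par P Q) = bpv P \<union> bpv Q"
| "bpv (Res c s P) = bpv P"
| "bpv (Alloc x P) = bpv P"
| "bpv (Free u P) = bpv P"

definition rn_id :: "name \<Rightarrow> name \<Rightarrow> ident \<Rightarrow> ident" where
  "rn_id c d u = (if u = Nm c then Nm d else u)"

primrec rn :: "name \<Rightarrow> name \<Rightarrow> proc \<Rightarrow> proc" where
  "rn c d (Out u vs P) = Out (rn_id c d u) (map (rn_id c d) vs) (rn c d P)"
| "rn c d (Inp u xs P) = Inp (rn_id c d u) xs (rn c d P)"
| "rn c d Nil = Nil"
| "rn c d (Cond u v P Q) = Cond (rn_id c d u) (rn_id c d v) (rn c d P) (rn c d Q)"
| "rn c d (Rec X P) = Rec X (rn c d P)"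
| "rn c d (PV X) = PV X"
| "rn c d (Par P Q) = Par (rn c d P) (rn c d Q)"
| "rn c d (Res e s P) = (if e = c then Res e s P else Res e s (rn c d P))"
| "rn c d (Alloc x P) = Alloc x (rn c d P)"
| "rn c d (Free u P) = Free (rn_id c d u) (rn c d P)"

fun rv_id :: "(var \<Rightarrow> var) \<Rightarrow> ident \<Rightarrow> ident" where
  "rv_id \<rho> (Vr x) = Vr (\<rho> x)" | "rv_id \<rho> (Nm c) = Nm c"

primrec rv :: "(var \<Rightarrow> var) \<Rightarrow> proc \<Rightarrow> proc" where
  "rv \<rho> (Out u vs P) = Out (rv_id \<rho> u) (map (rv_id \<rho>) vs) (rv \<rho> P)"
| "rv \<rho> (Inp u xs P) = Inp (rv_id \<rho> u) xs (rv (\<lambda>z. if z \<in> set xs then z else \<rho> z) P)"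
| "rv \<rho> Nil = Nil"
| "rv \<rho> (Cond u v P Q) = Cond (rv_id \<rho> u) (rv_id \<rho> v) (rv \<rho> P) (rv \<rho> Q)"
| "rv \<rho> (Rec X P) = Rec X (rv \<rho> P)"
| "rv \<rho> (PV X) = PV X"
| "rv \<rho> (Par P Q) = Par (rv \<rho> P) (rv \<rho> Q)"
| "rv \<rho> (Res c s P) = Res c s (rv \<rho> P)"
| "rv \<rho> (Alloc x P) = Alloc x (rv (\<lambda>z. if z = x then z else \<rho> z) P)"
| "rv \<rho> (Free u P) = Free (rv_id \<rho> u) (rv \<rho> P)"

primrec rpv :: "pvar \<Rightarrow> pvar \<Rightarrow> proc \<Rightarrow> proc" where
  "rpv X Y (Out u vs P) = Out u vs (rpv X Y P)"
| "rpv X Y (Inp u xs P) = Inp u xs (rpv X Y P)"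
| "rpv X Y Nil = Nil"
| "rpv X Y (Cond u v P Q) = Cond u v (rpv X Y P) (rpv X Y Q)"
| "rpv X Y (Rec Z P) = (if Z = X then Rec Z P else Rec Z (rpv X Y P))"
| "rpv X Y (PV Z) = (if Z = X then PV Y else PV Z)"
| "rpv X Y (Par P Q) = Par (rpv X Y P) (rpv X Y Q)"
| "rpv X Y (Res c s P) = Res c s (rpv X Y P)"
| "rpv X Y (Alloc x P) = Alloc x (rpv X Y P)"
| "rpv X Y (Free u P) = Free u (rpv X Y P)"

primrec psub :: "pvar \<Rightarrow> proc \<Rightarrow> proc \<Rightarrow> proc" where
  "psub X R (Out u vs P) = Out u vs (psub X R P)"
| "psub X R (Inp u xs P) = Inp u xs (psub X R P)"
| "psub X R Nil = Nil"
| "psub X R (Cond u v P Q) = Cond u v (psub X R P) (psub X R Q)"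
| "psub X R (Rec Z P) = (if Z = X then Rec Z P else Rec Z (psub X R P))"
| "psub X R (PV Z) = (if Z = X then R else PV Z)"
| "psub X R (Par P Q) = Par (psub X R P) (psub X R Q)"
| "psub X R (Res c s P) = Res c s (psub X R P)"
| "psub X R (Alloc x P) = Alloc x (psub X R P)"
| "psub X R (Free u P) = Free u (psub X R P)"

definition allnames :: "proc \<Rightarrow> name set" where "allnames P = fn P \<union> bn P"
definition allvars :: "proc \<Rightarrow> var set" where "allvars P = fv P \<union> bv P"
definition allpvars :: "proc \<Rightarrow> pvar set" where "allpvars P = fpv P \<union> bpv P"

inductive seq :: "proc \<Rightarrow> proc \<Rightarrow> bool" (infix "\<equiv>\<^sub>s" 50) where
  s_refl: "P \<equiv>\<^sub>s P"
| s_sym: "P \<equiv>\<^sub>s Q \<Longrightarrow> Q \<equiv>\<^sub>s P"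
| s_trans: "P \<equiv>\<^sub>s Q \<Longrightarrow> Q \<equiv>\<^sub>s R \<Longrightarrow> P \<equiv>\<^sub>s R"
| c_out: "P \<equiv>\<^sub>s Q \<Longrightarrow> Out u vs P \<equiv>\<^sub>s Out u vs Q"
| c_inp: "P \<equiv>\<^sub>s Q \<Longrightarrow> Inp u xs P \<equiv>\<^sub>s Inp u xs Q"
| c_cond: "P \<equiv>\<^sub>s P' \<Longrightarrow> Q \<equiv>\<^sub>s Q' \<Longrightarrow> Cond u v P Q \<equiv>\<^sub>s Cond u v P' Q'"
| c_rec: "P \<equiv>\<^sub>s Q \<Longrightarrow> Rec X P \<equiv>\<^sub>s Rec X Q"
| c_par: "P \<equiv>\<^sub>s P' \<Longrightarrow> Q \<equiv>\<^sub>s Q' \<Longrightarrow> Par P Q \<equiv>\<^sub>s Par P' Q'"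
| c_res: "P \<equiv>\<^sub>s Q \<Longrightarrow> Res c s P \<equiv>\<^sub>s Res c s Q"
| c_alloc: "P \<equiv>\<^sub>s Q \<Longrightarrow> Alloc x P \<equiv>\<^sub>s Alloc x Q"
| c_free: "P \<equiv>\<^sub>s Q \<Longrightarrow> Free u P \<equiv>\<^sub>s Free u Q"
| par_nil: "Par P Nil \<equiv>\<^sub>s P"
| par_comm: "Par P Q \<equiv>\<^sub>s Par Q P"
| par_assoc: "Par (Par P Q) R \<equiv>\<^sub>s Par P (Par Q R)"
| res_nil: "Res c s Nil \<equiv>\<^sub>s Nil"
| res_swap: "c \<noteq> d \<Longrightarrow> Res c s (Res d t P) \<equiv>\<^sub>s Res d t (Res c s P)"
| res_extr: "c \<notin> fn Q \<Longrightarrow> Par (Res c s P) Q \<equiv>\<^sub>s Res c s (Par P Q)"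
| alpha_res: "d \<notin> allnames P \<Longrightarrow> Res c s P \<equiv>\<^sub>s Res d s (rn c d P)"
| alpha_inp: "length ys = length xs \<Longrightarrow> distinct ys \<Longrightarrow> set ys \<inter> allvars P = {} \<Longrightarrow>
     Inp u xs P \<equiv>\<^sub>s Inp u ys (rv (\<lambda>z. case map_of (zip xs ys) z of Some y \<Rightarrow> y | None \<Rightarrow> z) P)"
| alpha_alloc: "y \<notin> allvars P \<Longrightarrow> Alloc x P \<equiv>\<^sub>s Alloc y (rv (\<lambda>z. if z = x then y else z) P)"
| alpha_rec: "Y \<notin> allpvars P \<Longrightarrow> Rec X P \<equiv>\<^sub>s Rec Y (rpv X Y P)"
| rec_unfold: "bn P \<inter> fn (Rec X P) = {} \<Longrightarrow> bv P \<inter> fv (Rec X P) = {} \<Longrightarrow>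
     bpv P \<inter> fpv (Rec X P) = {} \<Longrightarrow> Rec X P \<equiv>\<^sub>s psub X (Rec X P) P"

inductive err :: "cstate \<Rightarrow> proc \<Rightarrow> bool" where
  err_arity: "\<forall>v\<in>set ds. \<exists>d. v = Nm d \<Longrightarrow> length ds \<noteq> length xs \<Longrightarrow>
     err \<sigma> (Par (Out (Nm c) ds P) (Inp (Nm c) xs Q))"
| err_out: "\<forall>v\<in>set ds. \<exists>d. v = Nm d \<Longrightarrow> \<sigma> c = Some Bot \<Longrightarrow> err \<sigma> (Out (Nm c) ds P)"
| err_inp: "\<sigma> c = Some Bot \<Longrightarrow> err \<sigma> (Inp (Nm c) xs Q)"
| err_struct: "P \<equiv>\<^sub>s Q \<Longrightarrow> err \<sigma> Q \<Longrightarrow> err \<sigma> P"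
| err_parL: "err \<sigma> P \<Longrightarrow> err \<sigma> (Par P Q)"
| err_parR: "err \<sigma> P \<Longrightarrow> err \<sigma> (Par Q P)"
| err_res: "c \<notin> dom \<sigma> \<Longrightarrow> err (\<sigma>(c \<mapsto> s)) P \<Longrightarrow> err \<sigma> (Res c s P)"

definition config :: "cstate \<Rightarrow> proc \<Rightarrow> bool" where
  "config \<sigma> P \<longleftrightarrow> finite (dom \<sigma>) \<and> fn P \<subseteq> dom \<sigma>"

datatype attr = Aff | UnR | Uq nat   \<comment> \<open>aff, un, unique-after-i-steps\<close>

datatype ty = Ch "ty list" attr | Proc

datatype subj = SI ident | SP pvar

type_synonym env = "(subj \<times> ty) multiset"

definition subjects :: "env \<Rightarrow> subj set" where
  "subjects \<Gamma> = fst ` set_mset \<Gamma>"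

text \<open>Decrement: decr u Ts a D means  (u:[Ts]^(a-1)) = D  (as an environment part).\<close>
inductive decr :: "ident \<Rightarrow> ty list \<Rightarrow> attr \<Rightarrow> env \<Rightarrow> bool" where
  "decr u Ts Aff {#}"
| "decr u Ts UnR {#(SI u, Ch Ts UnR)#}"
| "decr u Ts (Uq (Suc i)) {#(SI u, Ch Ts (Uq i))#}"

inductive split :: "ty \<Rightarrow> ty \<Rightarrow> ty \<Rightarrow> bool" where
  "split (Ch Ts UnR) (Ch Ts UnR) (Ch Ts UnR)"
| "split Proc Proc Proc"
| "split (Ch Ts (Uq i)) (Ch Ts Aff) (Ch Ts (Uq (Suc i)))"

inductive attr_le :: "attr \<Rightarrow> attr \<Rightarrow> bool" where
  "attr_le (Uq i) (Uq (Suc i))"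
| "attr_le (Uq (Suc i)) UnR"
| "attr_le UnR Aff"

inductive ty_le :: "ty \<Rightarrow> ty \<Rightarrow> bool" where
  "attr_le a1 a2 \<Longrightarrow> ty_le (Ch Ts a1) (Ch Ts a2)"

fun unr :: "ty \<Rightarrow> bool" where
  "unr (Ch Ts a) = (a = UnR)" | "unr Proc = True"

inductive typed :: "env \<Rightarrow> proc \<Rightarrow> bool" (infix "\<turnstile>" 40) where
  t_inp: "decr u Ts a D \<Longrightarrow> length xs = length Ts \<Longrightarrow> distinct xs \<Longrightarrow>
     (\<forall>x\<in>set xs. SI (Vr x) \<notin> subjects (\<Gamma> + {#(SI u, Ch Ts a)#})) \<Longrightarrow>
     \<Gamma> + D + mset (zip (map (\<lambda>x. SI (Vr x)) xs) Ts) \<turnstile> P \<Longrightarrow>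
     \<Gamma> + {#(SI u, Ch Ts a)#} \<turnstile> Inp u xs P"
| t_out: "decr u Ts a D \<Longrightarrow> length vs = length Ts \<Longrightarrow> \<Gamma> + D \<turnstile> P \<Longrightarrow>
     \<Gamma> + {#(SI u, Ch Ts a)#} + mset (zip (map SI vs) Ts) \<turnstile> Out u vs P"
| t_par: "\<Gamma>1 \<turnstile> P \<Longrightarrow> \<Gamma>2 \<turnstile> Q \<Longrightarrow> \<Gamma>1 + \<Gamma>2 \<turnstile> Par P Q"
| t_cond: "SI u \<in> subjects \<Gamma> \<Longrightarrow> SI v \<in> subjects \<Gamma> \<Longrightarrow> \<Gamma> \<turnstile> P \<Longrightarrow> \<Gamma> \<turnstile> Q \<Longrightarrow>
     \<Gamma> \<turnstile> Cond u v P Q"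
| t_rec: "\<forall>a\<in>#\<Gamma>. unr (snd a) \<Longrightarrow> SP X \<notin> subjects \<Gamma> \<Longrightarrow>
     \<Gamma> + {#(SP X, Proc)#} \<turnstile> P \<Longrightarrow> \<Gamma> \<turnstile> Rec X P"
| t_var: "{#(SP X, Proc)#} \<turnstile> PV X"
| t_alloc: "SI (Vr x) \<notin> subjects \<Gamma> \<Longrightarrow> \<Gamma> + {#(SI (Vr x), Ch Ts (Uq 0))#} \<turnstile> P \<Longrightarrow>
     \<Gamma> \<turnstile> Alloc x P"
| t_free: "\<Gamma> \<turnstile> P \<Longrightarrow> \<Gamma> + {#(SI u, Ch Ts (Uq 0))#} \<turnstile> Free u P"
| t_nil: "{#} \<turnstile> Nil"
| t_res_top: "SI (Nm c) \<notin> subjects \<Gamma> \<Longrightarrow> \<Gamma> + {#(SI (Nm c), T)#} \<turnstile> P \<Longrightarrow>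
     \<Gamma> \<turnstile> Res c Top P"
| t_res_bot: "SI (Nm c) \<notin> subjects \<Gamma> \<Longrightarrow> \<Gamma> \<turnstile> P \<Longrightarrow> \<Gamma> \<turnstile> Res c Bot P"
| t_split: "split T T1 T2 \<Longrightarrow> \<Gamma> + {#(w, T1), (w, T2)#} \<turnstile> P \<Longrightarrow> \<Gamma> + {#(w, T)#} \<turnstile> P"
| t_weak: "\<Gamma> \<turnstile> P \<Longrightarrow> \<Gamma> + {#(w, T)#} \<turnstile> P"
| t_sub: "\<Gamma> + {#(w, T2)#} \<turnstile> P \<Longrightarrow> ty_le T1 T2 \<Longrightarrow> \<Gamma> + {#(w, T1)#} \<turnstile> P"
| t_uq0: "\<Gamma> + {#(w, Ch Ts2 (Uq 0))#} \<turnstile> P \<Longrightarrow> \<Gamma> + {#(w, Ch Ts1 (Uq 0))#} \<turnstile> P"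

definition partial_env :: "env \<Rightarrow> bool" where
  "partial_env \<Gamma> \<longleftrightarrow> (\<forall>w. size (filter_mset (\<lambda>a. fst a = w) \<Gamma>) \<le> 1)"

definition ctyped :: "env \<Rightarrow> cstate \<Rightarrow> proc \<Rightarrow> bool" where
  "ctyped \<Gamma> \<sigma> P \<longleftrightarrow> (\<forall>c. SI (Nm c) \<in> subjects \<Gamma> \<longrightarrow> \<sigma> c = Some Top) \<and> \<Gamma> \<turnstile> P \<and> partial_env \<Gamma>"

end

theory Submission
  imports Defs
begin

fun G :: "(name \<Rightarrow> (chst \<times> nat) option) \<Rightarrow> proc \<Rightarrow> bool" where
  "G \<rho> (Out u vs P) = (case u of Nm c \<Rightarrow> \<rho> c = Some (Top, length vs) | Vr x \<Rightarrow> True)"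
| "G \<rho> (Inp u xs P) = (case u of Nm c \<Rightarrow> \<rho> c = Some (Top, length xs) | Vr x \<Rightarrow> True)"
| "G \<rho> Nil = True"
| "G \<rho> (Cond u v P Q) = True"
| "G \<rho> (Rec X P) = G \<rho> P"
| "G \<rho> (PV X) = True"
| "G \<rho> (Par P Q) = (G \<rho> P \<and> G \<rho> Q)"
| "G \<rho> (Res c s P) = (\<exists>n. G (\<rho>(c \<mapsto> (s, n))) P)"
| "G \<rho> (Alloc x P) = True"
| "G \<rho> (Free u P) = True"

lemma G_loc: "(\<forall>c\<in>fn P. \<rho>1 c = \<rho>2 c) \<Longrightarrow> G \<rho>1 P = G \<rho>2 P"
proof (induction P arbitrary: \<rho>1 \<rho>2)
  case (Out u vs P) then show ?case by (cases u) auto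
next
  case (Inp u xs P) then show ?case by (cases u) auto
next
  case (Par P Q)
  have "G \<rho>1 P = G \<rho>2 P" by (rule Par.IH(1)) (use Par.prems in auto)
  moreover have "G \<rho>1 Q = G \<rho>2 Q" by (rule Par.IH(2)) (use Par.prems in auto)
  ultimately show ?case by simp
next
  case (Res c s P)
  have "\<And>n. G (\<rho>1(c \<mapsto> (s, n))) P = G (\<rho>2(c \<mapsto> (s, n))) P"
    by (rule Res.IH) (use Res.prems in auto)
  then show ?case by simp
qed auto

lemma G_rn: "d \<notin> allnames P \<Longrightarrow> G (\<rho>(d \<mapsto> v)) (rn c d P) = G (\<rho>(c \<mapsto> v)) P"
proof (induction P arbitrary: \<rho>)
  case (Out u vs P) then show ?case
    by (cases u) (auto simp: rn_id_def allnames_def)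
next
  case (Inp u xs P) then show ?case
    by (cases u) (auto simp: rn_id_def allnames_def)
next
  case (Par P Q) then show ?case by (auto simp: allnames_def)
next
  case (Rec X P) then show ?case by (auto simp: allnames_def)
next
  case (Res e s P)
  show ?case
  proof (cases "e = c")
    case True
    have "G (\<rho>(d \<mapsto> v)) (Res c s P) = G (\<rho>(c \<mapsto> v)) (Res c s P)"
      by (rule G_loc) (use Res.prems True in \<open>auto simp: allnames_def\<close>)
    moreover have "rn c d (Res e s P) = Res c s P" using True by simp
    ultimately show ?thesis using True by metis
  next
    case False
    have ed: "e \<noteq> d" using Res.prems by (auto simp: allnames_def)
    have dP: "d \<notin> allnames P" using Res.prems by (auto simp: allnames_def)
    have "\<And>n. G (\<rho>(d \<mapsto> v, e \<mapsto> (s, n))) (rn c d P) = G (\<rho>(c \<mapsto> v, e \<mapsto> (s, n))) P"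
    proof -
      fix n
      have "G (\<rho>(e \<mapsto> (s, n), d \<mapsto> v)) (rn c d P) = G (\<rho>(e \<mapsto> (s, n), c \<mapsto> v)) P"
        by (rule Res.IH[OF dP])
      then show "G (\<rho>(d \<mapsto> v, e \<mapsto> (s, n))) (rn c d P) = G (\<rho>(c \<mapsto> v, e \<mapsto> (s, n))) P"
        using ed False by (simp add: fun_upd_twist)
    qed
    moreover have "rn c d (Res e s P) = Res e s (rn c d P)" using False by simp
    ultimately show ?thesis by (simp only: G.simps)
  qed
qed auto

lemma G_rpv: "G \<rho> (rpv X Y P) = G \<rho> P"
proof (induction P arbitrary: \<rho>)
  case (Out u vs P) then show ?case by (cases u) auto
next
  case (Inp u xs P) then show ?case by (cases u) auto
qed auto

lemma G_psub1: "G \<rho> (psub X R P) \<Longrightarrow> G \<rho> P"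
proof (induction P arbitrary: \<rho>)
  case (Out u vs P) then show ?case by (cases u) auto
next
  case (Inp u xs P) then show ?case by (cases u) auto
next
  case (Rec Z P) then show ?case by (auto split: if_splits)
next
  case (Res c s P) then show ?case by auto
qed auto

lemma G_psub2: "G \<rho> R \<Longrightarrow> G \<rho> P \<Longrightarrow> bn P \<inter> fn R = {} \<Longrightarrow> G \<rho> (psub X R P)"
proof (induction P arbitrary: \<rho>)
  case (Out u vs P) then show ?case by (cases u) auto
next
  case (Inp u xs P) then show ?case by (cases u) auto
next
  case (Res c s P)
  then obtain n where n: "G (\<rho>(c \<mapsto> (s, n))) P" by auto
  have "G (\<rho>(c \<mapsto> (s, n))) R = G \<rho> R"
    by (rule G_loc) (use Res.prems in auto)
  then have "G (\<rho>(c \<mapsto> (s, n))) (psub X R P)"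
    using Res n by auto
  then show ?case by auto
qed auto

lemma G_seq: "P \<equiv>\<^sub>s Q \<Longrightarrow> G \<rho> P = G \<rho> Q"
proof (induction arbitrary: \<rho> rule: seq.induct)
  case (res_extr c Q s P)
  have "\<And>n. G (\<rho>(c \<mapsto> (s, n))) Q = G \<rho> Q"
    by (rule G_loc) (use res_extr in auto)
  then show ?case by auto
next
  case (alpha_res d P c s)
  then show ?case using G_rn[OF alpha_res] by simp
next
  case (alpha_rec Y P X)
  then show ?case by (simp add: G_rpv)
next
  case (rec_unfold P X)
  show ?case
  proof
    assume "G \<rho> (Rec X P)"
    then show "G \<rho> (psub X (Rec X P) P)"
      using G_psub2[of \<rho> "Rec X P" P X] rec_unfold by auto
  next
    assume "G \<rho> (psub X (Rec X P) P)"
    then show "G \<rho> (Rec X P)" using G_psub1 by auto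
  qed
next
  case (res_swap c d s t P)
  show ?case
  proof
    assume "G \<rho> (Res c s (Res d t P))"
    then obtain n m where "G (\<rho>(c \<mapsto> (s, n), d \<mapsto> (t, m))) P" by auto
    then have "G (\<rho>(d \<mapsto> (t, m), c \<mapsto> (s, n))) P" using res_swap by (simp add: fun_upd_twist)
    then show "G \<rho> (Res d t (Res c s P))" by auto
  next
    assume "G \<rho> (Res d t (Res c s P))"
    then obtain n m where "G (\<rho>(d \<mapsto> (t, m), c \<mapsto> (s, n))) P" by auto
    then have "G (\<rho>(c \<mapsto> (s, n), d \<mapsto> (t, m))) P" using res_swap by (simp add: fun_upd_twist)
    then show "G \<rho> (Res c s (Res d t P))" by auto
  qed
next
  case (c_out P Q u vs) then show ?case by (cases u) auto
next
  case (c_inp P Q u xs) then show ?case by (cases u) auto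
next
  case (alpha_inp ys xs P u) then show ?case by (cases u) auto
qed auto


lemma subj_add[simp]: "subjects (A + B) = subjects A \<union> subjects B"
  by (simp add: subjects_def image_Un)
lemma subj_single[simp]: "subjects {#a#} = {fst a}"
  by (simp add: subjects_def)
lemma subj_addm[simp]: "subjects (add_mset a M) = insert (fst a) (subjects M)"
  by (simp add: subjects_def)
lemma idn_iff[simp]: "c \<in> idn u \<longleftrightarrow> u = Nm c"
  by (cases u) auto
lemma subj_empty[simp]: "subjects {#} = {}"
  by (simp add: subjects_def)
lemma subj_zip: "length vs = length Ts \<Longrightarrow> subjects (mset (zip (map SI vs) Ts)) = SI ` set vs"
proof -
  assume l: "length vs = length Ts"
  have "subjects (mset (zip (map SI vs) Ts)) = set (map fst (zip (map SI vs) Ts))"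
    by (simp add: subjects_def)
  also have "map fst (zip (map SI vs) Ts) = map SI vs" using l by (simp add: map_fst_zip)
  finally show ?thesis by simp
qed

lemma subj_zip_sub: "subjects (mset (zip as bs)) \<subseteq> set as"
  by (auto simp: subjects_def dest: set_zip_leftD)

lemma decr_subj: "decr u Ts a D \<Longrightarrow> subjects D \<subseteq> {SI u}"
  by (induction rule: decr.induct) auto

lemma typed_fn: "\<Gamma> \<turnstile> P \<Longrightarrow> c \<in> fn P \<Longrightarrow> SI (Nm c) \<in> subjects \<Gamma>"
proof (induction arbitrary: c rule: typed.induct)
  case (t_inp u Ts a D xs \<Gamma> P)
  show ?case
  proof (cases "u = Nm c")
    case False
    then have "c \<in> fn P" using t_inp.prems by auto
    then have "SI (Nm c) \<in> subjects (\<Gamma> + D + mset (zip (map (\<lambda>x. SI (Vr x)) xs) Ts))"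
      by (rule t_inp.IH)
    then show ?thesis using decr_subj[OF t_inp.hyps(1)] subj_zip_sub[of "map (\<lambda>x. SI (Vr x)) xs" Ts] False
      by auto
  qed auto
next
  case (t_out u Ts a D vs \<Gamma> P)
  show ?case
  proof (cases "c \<in> fn P")
    case True
    then have "SI (Nm c) \<in> subjects (\<Gamma> + D)" by (rule t_out.IH)
    then show ?thesis using decr_subj[OF t_out.hyps(1)] by auto
  next
    case False
    then show ?thesis using t_out.prems subj_zip[OF t_out.hyps(2)] by auto
  qed
qed (auto split: if_splits)

lemma err_G: "err \<sigma> P \<Longrightarrow> (\<forall>c. map_option fst (\<rho> c) = \<sigma> c) \<Longrightarrow> G \<rho> P \<Longrightarrow> False"
proof (induction arbitrary: \<rho> rule: err.induct)
  case (err_out ds \<sigma> c P)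
  then have "\<rho> c = Some (Top, length ds)" by simp
  moreover have "map_option fst (\<rho> c) = \<sigma> c" using err_out.prems(1) by blast
  ultimately show ?case using err_out.hyps(2) by simp
next
  case (err_inp \<sigma> c xs Q)
  then have "\<rho> c = Some (Top, length xs)" by simp
  moreover have "map_option fst (\<rho> c) = \<sigma> c" using err_inp.prems(1) by blast
  ultimately show ?case using err_inp.hyps(1) by simp
next
  case (err_struct P Q \<sigma>)
  then show ?case using G_seq by blast
next
  case (err_res c \<sigma> s P)
  then obtain n where "G (\<rho>(c \<mapsto> (s, n))) P" by auto
  moreover have "\<forall>d. map_option fst ((\<rho>(c \<mapsto> (s, n))) d) = (\<sigma>(c \<mapsto> s)) d"
    using err_res.prems by auto
  ultimately show ?case using err_res.IH by blast
qed auto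

fun ar :: "ty \<Rightarrow> nat" where
  "ar (Ch Ts a) = length Ts" | "ar Proc = 0"

definition isU0 :: "ty \<Rightarrow> bool" where "isU0 T \<longleftrightarrow> (\<exists>Ts. T = Ch Ts (Uq 0))"

definition Good :: "env \<Rightarrow> bool" where
  "Good \<Gamma> \<longleftrightarrow> (\<forall>c T. (SI (Nm c), T) \<in># \<Gamma> \<longrightarrow> isU0 T \<longrightarrow>
      filter_mset (\<lambda>a. fst a = SI (Nm c)) \<Gamma> = {#(SI (Nm c), T)#})"

definition fits :: "(name \<Rightarrow> (chst \<times> nat) option) \<Rightarrow> env \<Rightarrow> bool" where
  "fits \<rho> \<Gamma> \<longleftrightarrow> (\<forall>c T. (SI (Nm c), T) \<in># \<Gamma> \<longrightarrow> \<rho> c = Some (Top, ar T))"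

definition sim :: "env \<Rightarrow> (name \<Rightarrow> (chst \<times> nat) option) \<Rightarrow> (name \<Rightarrow> (chst \<times> nat) option) \<Rightarrow> bool" where
  "sim \<Gamma> \<rho>' \<rho> \<longleftrightarrow> (\<forall>c. \<rho>' c = \<rho> c \<or> ((\<exists>T. (SI (Nm c), T) \<in># \<Gamma> \<and> isU0 T) \<and> (\<exists>n. \<rho>' c = Some (Top, n))))"

lemma sim_refl: "sim \<Gamma> \<rho> \<rho>" by (simp add: sim_def)

lemma fits_mono: "fits \<rho> \<Gamma> \<Longrightarrow> set_mset \<Delta> \<subseteq> set_mset \<Gamma> \<Longrightarrow> fits \<rho> \<Delta>"
  by (auto simp: fits_def)

lemma sim_mono: "sim \<Delta> \<rho>' \<rho> \<Longrightarrow> set_mset \<Delta> \<subseteq> set_mset \<Gamma> \<Longrightarrow> sim \<Gamma> \<rho>' \<rho>"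
proof -
  assume a: "sim \<Delta> \<rho>' \<rho>" and sub: "set_mset \<Delta> \<subseteq> set_mset \<Gamma>"
  show ?thesis unfolding sim_def
  proof
    fix c
    have "\<rho>' c = \<rho> c \<or> (\<exists>T. (SI (Nm c), T) \<in># \<Delta> \<and> isU0 T) \<and> (\<exists>n. \<rho>' c = Some (Top, n))"
      using a unfolding sim_def by (rule spec)
    then show "\<rho>' c = \<rho> c \<or> (\<exists>T. (SI (Nm c), T) \<in># \<Gamma> \<and> isU0 T) \<and> (\<exists>n. \<rho>' c = Some (Top, n))"
      using sub by auto
  qed
qed

lemma single_part: "A + B = {#x#} \<Longrightarrow> y \<in># A \<Longrightarrow> A = {#x#} \<and> B = {#}"
  by (auto simp: union_is_single)
lemma single_part2: "A + B = {#x#} \<Longrightarrow> y \<in># A \<Longrightarrow> z \<in># B \<Longrightarrow> False"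
  by (auto simp: union_is_single)

lemma Good_mono: "Good (A + B) \<Longrightarrow> Good A"
  unfolding Good_def
proof (intro allI impI)
  fix c T assume g: "\<forall>c T. (SI (Nm c), T) \<in># A + B \<longrightarrow> isU0 T \<longrightarrow>
      filter_mset (\<lambda>a. fst a = SI (Nm c)) (A + B) = {#(SI (Nm c), T)#}"
    and m: "(SI (Nm c), T) \<in># A" and u: "isU0 T"
  have "filter_mset (\<lambda>a. fst a = SI (Nm c)) (A + B) = {#(SI (Nm c), T)#}"
    using g[rule_format, of c T] m u by simp
  then have "filter_mset (\<lambda>a. fst a = SI (Nm c)) A + filter_mset (\<lambda>a. fst a = SI (Nm c)) B = {#(SI (Nm c), T)#}"
    by (simp only: filter_union_mset)
  moreover have "(SI (Nm c), T) \<in># filter_mset (\<lambda>a. fst a = SI (Nm c)) A" using m by simp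
  ultimately show "filter_mset (\<lambda>a. fst a = SI (Nm c)) A = {#(SI (Nm c), T)#}"
    by (rule conjunct1[OF single_part])
qed

lemma Good_excl: "Good (A + B) \<Longrightarrow> (SI (Nm c), T) \<in># B \<Longrightarrow> isU0 T \<Longrightarrow> SI (Nm c) \<notin> subjects A"
proof
  assume g: "Good (A + B)" and m: "(SI (Nm c), T) \<in># B" and u: "isU0 T" and s: "SI (Nm c) \<in> subjects A"
  from s obtain T' where m': "(SI (Nm c), T') \<in># A" by (auto simp: subjects_def)
  have "filter_mset (\<lambda>a. fst a = SI (Nm c)) A + filter_mset (\<lambda>a. fst a = SI (Nm c)) B = {#(SI (Nm c), T)#}"
    using g m u unfolding Good_def by auto
  moreover have "(SI (Nm c), T') \<in># filter_mset (\<lambda>a. fst a = SI (Nm c)) A" using m' by simp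
  moreover have "(SI (Nm c), T) \<in># filter_mset (\<lambda>a. fst a = SI (Nm c)) B" using m by simp
  ultimately show False
    by (rule single_part2)
qed

lemma Good_fresh: "Good \<Gamma> \<Longrightarrow> SI (Nm c) \<notin> subjects \<Gamma> \<Longrightarrow> Good (add_mset (SI (Nm c), T) \<Gamma>)"
  unfolding Good_def
proof (intro allI impI)
  fix d T' assume g: "\<forall>c T. (SI (Nm c), T) \<in># \<Gamma> \<longrightarrow> isU0 T \<longrightarrow>
      filter_mset (\<lambda>a. fst a = SI (Nm c)) \<Gamma> = {#(SI (Nm c), T)#}"
    and f: "SI (Nm c) \<notin> subjects \<Gamma>" and m: "(SI (Nm d), T') \<in># add_mset (SI (Nm c), T) \<Gamma>" and u: "isU0 T'"
  have e: "filter_mset (\<lambda>a. fst a = SI (Nm c)) \<Gamma> = {#}"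
    using f by (force simp: subjects_def filter_mset_eq_mempty_iff)
  show "filter_mset (\<lambda>a. fst a = SI (Nm d)) (add_mset (SI (Nm c), T) \<Gamma>) = {#(SI (Nm d), T')#}"
  proof (cases "d = c")
    case True
    then have "T' = T" using m f by (force simp: subjects_def)
    then show ?thesis using True e by simp
  next
    case False
    then have "(SI (Nm d), T') \<in># \<Gamma>" using m by auto
    then show ?thesis using g u False by auto
  qed
qed

lemma Good_replace:
  assumes g: "Good (add_mset (w, T) \<Gamma>)" and N: "\<forall>x\<in>#N. fst x = w \<and> \<not> isU0 (snd x)"
  shows "Good (N + \<Gamma>)"
  unfolding Good_def
proof (intro allI impI)
  fix c T' assume m: "(SI (Nm c), T') \<in># N + \<Gamma>" and u: "isU0 T'"
  have mG: "(SI (Nm c), T') \<in># \<Gamma>"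
  proof (rule ccontr)
    assume "(SI (Nm c), T') \<notin># \<Gamma>"
    then have "(SI (Nm c), T') \<in># N" using m by simp
    then have "fst (SI (Nm c), T') = w \<and> \<not> isU0 (snd (SI (Nm c), T'))" using N by (rule bspec[rotated])
    then have "\<not> isU0 T'" by simp
    then show False using u by simp
  qed
  then have "(SI (Nm c), T') \<in># add_mset (w, T) \<Gamma>" by simp
  then have f: "filter_mset (\<lambda>a. fst a = SI (Nm c)) (add_mset (w, T) \<Gamma>) = {#(SI (Nm c), T')#}"
    using g u unfolding Good_def by blast
  have wc: "w \<noteq> SI (Nm c)"
  proof
    assume "w = SI (Nm c)"
    then have "filter_mset (\<lambda>a. fst a = SI (Nm c)) (add_mset (w, T) \<Gamma>) =
        add_mset (w, T) (filter_mset (\<lambda>a. fst a = SI (Nm c)) \<Gamma>)" by simp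
    moreover have "filter_mset (\<lambda>a. fst a = SI (Nm c)) \<Gamma> \<noteq> {#}" using mG
    proof -
      have "(SI (Nm c), T') \<in># filter_mset (\<lambda>a. fst a = SI (Nm c)) \<Gamma>" using mG by simp
      then show ?thesis by (rule multi_member_split[THEN exE]) simp
    qed
    ultimately show False using f by (simp, blast)
  qed
  have "filter_mset (\<lambda>a. fst a = SI (Nm c)) N = {#}"
    unfolding filter_mset_eq_mempty_iff
  proof (intro allI impI)
    fix x assume "x \<in># N"
    then have "fst x = w" using N by blast
    then show "\<not> fst x = SI (Nm c)" using wc by simp
  qed
  then show "filter_mset (\<lambda>a. fst a = SI (Nm c)) (N + \<Gamma>) = {#(SI (Nm c), T')#}"
    using f wc by simp
qed

lemma fits_replace:
  assumes "fits \<rho> (add_mset (w, T) \<Gamma>)" and "\<forall>x\<in>#N. fst x = w \<and> ar (snd x) = ar T"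
  shows "fits \<rho> (N + \<Gamma>)"
  unfolding fits_def
proof (intro allI impI)
  fix c T' assume m: "(SI (Nm c), T') \<in># N + \<Gamma>"
  show "\<rho> c = Some (Top, ar T')"
  proof (cases "(SI (Nm c), T') \<in># N")
    case True
    then have "w = SI (Nm c)" "ar T' = ar T" using assms(2) by auto
    then show ?thesis using assms(1) unfolding fits_def by force
  next
    case False
    then have "(SI (Nm c), T') \<in># \<Gamma>" using m by simp
    then show ?thesis using assms(1) unfolding fits_def by force
  qed
qed

lemma sim_replace:
  assumes "sim (N + \<Gamma>) \<rho>' \<rho>" and "\<forall>x\<in>#N. \<not> isU0 (snd x)"
  shows "sim (add_mset y \<Gamma>) \<rho>' \<rho>"
  unfolding sim_def
proof
  fix c
  have "\<rho>' c = \<rho> c \<or> (\<exists>T. (SI (Nm c), T) \<in># N + \<Gamma> \<and> isU0 T) \<and> (\<exists>n. \<rho>' c = Some (Top, n))"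
    using assms(1) unfolding sim_def by (rule spec)
  moreover have "(SI (Nm c), T) \<in># add_mset y \<Gamma>" if "(SI (Nm c), T) \<in># N + \<Gamma>" "isU0 T" for T
    using assms(2) that by force
  ultimately show "\<rho>' c = \<rho> c \<or> (\<exists>T. (SI (Nm c), T) \<in># add_mset y \<Gamma> \<and> isU0 T) \<and> (\<exists>n. \<rho>' c = Some (Top, n))"
    by blast
qed

lemma split_props: "split T T1 T2 \<Longrightarrow> ar T1 = ar T \<and> ar T2 = ar T \<and> \<not> isU0 T1 \<and> \<not> isU0 T2"
  by (induction rule: split.induct) (auto simp: isU0_def)

lemma le_props: "ty_le T1 T2 \<Longrightarrow> ar T1 = ar T2 \<and> \<not> isU0 T2"
  by (induction rule: ty_le.induct) (auto simp: isU0_def elim: attr_le.cases)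

lemma typed_G: "\<Gamma> \<turnstile> P \<Longrightarrow> Good \<Gamma> \<Longrightarrow> fits \<rho> \<Gamma> \<Longrightarrow> \<exists>\<rho>'. sim \<Gamma> \<rho>' \<rho> \<and> G \<rho>' P"
proof (induction arbitrary: \<rho> rule: typed.induct)
  case (t_inp u Ts a D xs \<Gamma> P)
  have "G \<rho> (Inp u xs P)"
    using t_inp.prems(2) t_inp.hyps(2) by (cases u) (auto simp: fits_def)
  then show ?case using sim_refl by blast
next
  case (t_out u Ts a D vs \<Gamma> P)
  have "G \<rho> (Out u vs P)"
    using t_out.prems(2) t_out.hyps(2) by (cases u) (auto simp: fits_def)
  then show ?case using sim_refl by blast
next
  case (t_par \<Gamma>1 P \<Gamma>2 Q)
  have g1: "Good \<Gamma>1" using Good_mono t_par.prems(1) by blast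
  have g2: "Good \<Gamma>2" using Good_mono[of \<Gamma>2 \<Gamma>1] t_par.prems(1) by (simp add: add.commute)
  obtain \<rho>1 where s1: "sim \<Gamma>1 \<rho>1 \<rho>" and G1: "G \<rho>1 P"
    using t_par.IH(1)[OF g1 fits_mono[OF t_par.prems(2)]] by auto
  obtain \<rho>2 where s2: "sim \<Gamma>2 \<rho>2 \<rho>" and G2: "G \<rho>2 Q"
    using t_par.IH(2)[OF g2 fits_mono[OF t_par.prems(2)]] by auto
  define \<rho>' where "\<rho>' c = (if \<rho>1 c \<noteq> \<rho> c then \<rho>1 c else \<rho>2 c)" for c
  have "G \<rho>1 P = G \<rho>' P"
  proof (rule G_loc, intro ballI)
    fix c assume c: "c \<in> fn P"
    show "\<rho>1 c = \<rho>' c"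
    proof (cases "\<rho>1 c = \<rho> c \<and> \<rho>2 c \<noteq> \<rho> c")
      case True
      then obtain T where "(SI (Nm c), T) \<in># \<Gamma>2" "isU0 T" using s2 by (auto simp: sim_def)
      then have "SI (Nm c) \<notin> subjects \<Gamma>1" using Good_excl t_par.prems(1) by blast
      then show ?thesis using typed_fn[OF t_par.hyps(1) c] by simp
    qed (auto simp: \<rho>'_def)
  qed
  moreover have "G \<rho>2 Q = G \<rho>' Q"
  proof (rule G_loc, intro ballI)
    fix c assume c: "c \<in> fn Q"
    show "\<rho>2 c = \<rho>' c"
    proof (cases "\<rho>1 c \<noteq> \<rho> c")
      case True
      then obtain T where "(SI (Nm c), T) \<in># \<Gamma>1" "isU0 T" using s1 by (auto simp: sim_def)
      then have "SI (Nm c) \<notin> subjects \<Gamma>2" using Good_excl[of \<Gamma>2 \<Gamma>1] t_par.prems(1) by (simp add: add.commute)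
      then show ?thesis using typed_fn[OF t_par.hyps(2) c] by simp
    qed (auto simp: \<rho>'_def)
  qed
  moreover have "sim (\<Gamma>1 + \<Gamma>2) \<rho>' \<rho>"
    using s1 s2 unfolding sim_def \<rho>'_def by auto
  ultimately show ?case using G1 G2 by auto
next
  case (t_rec \<Gamma> X P)
  have "Good (\<Gamma> + {#(SP X, Proc)#})"
    using t_rec.prems(1) unfolding Good_def by auto
  moreover have "fits \<rho> (\<Gamma> + {#(SP X, Proc)#})"
    using t_rec.prems(2) unfolding fits_def by auto
  ultimately obtain \<rho>' where "sim (\<Gamma> + {#(SP X, Proc)#}) \<rho>' \<rho>" "G \<rho>' P" using t_rec.IH by blast
  moreover then have "sim \<Gamma> \<rho>' \<rho>" unfolding sim_def by auto
  ultimately show ?case by auto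
next
  case (t_res_top c \<Gamma> T P)
  define \<rho>0 where "\<rho>0 = \<rho>(c \<mapsto> (Top, ar T))"
  have "Good (\<Gamma> + {#(SI (Nm c), T)#})"
    using Good_fresh[OF t_res_top.prems(1) t_res_top.hyps(1)] by simp
  moreover have "fits \<rho>0 (\<Gamma> + {#(SI (Nm c), T)#})"
    using t_res_top.prems(2) t_res_top.hyps(1) unfolding fits_def \<rho>0_def
    by (force simp: subjects_def)
  ultimately obtain \<rho>'' where s: "sim (\<Gamma> + {#(SI (Nm c), T)#}) \<rho>'' \<rho>0" and g: "G \<rho>'' P"
    using t_res_top.IH by blast
  obtain n where n: "\<rho>'' c = Some (Top, n)" using s unfolding sim_def \<rho>0_def by force
  define \<rho>' where "\<rho>' = \<rho>''(c := \<rho> c)"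
  have "\<rho>'(c \<mapsto> (Top, n)) = \<rho>''" using n by (auto simp: \<rho>'_def)
  then have "G \<rho>' (Res c Top P)" using g by auto
  moreover have "sim \<Gamma> \<rho>' \<rho>"
    unfolding sim_def
  proof
    fix d
    show "\<rho>' d = \<rho> d \<or> (\<exists>T. (SI (Nm d), T) \<in># \<Gamma> \<and> isU0 T) \<and> (\<exists>n. \<rho>' d = Some (Top, n))"
    proof (cases "d = c")
      case True then show ?thesis by (simp add: \<rho>'_def)
    next
      case False
      have "\<rho>'' d = \<rho>0 d \<or> (\<exists>T'. (SI (Nm d), T') \<in># \<Gamma> + {#(SI (Nm c), T)#} \<and> isU0 T') \<and> (\<exists>n. \<rho>'' d = Some (Top, n))"
        using s unfolding sim_def by (rule spec)
      then show ?thesis using False unfolding \<rho>'_def \<rho>0_def by auto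
    qed
  qed
  ultimately show ?case by blast
next
  case (t_res_bot c \<Gamma> P)
  obtain \<rho>' where s: "sim \<Gamma> \<rho>' \<rho>" and g: "G \<rho>' P" using t_res_bot by blast
  have "G (\<rho>'(c \<mapsto> (Bot, 0))) P = G \<rho>' P"
    by (rule G_loc) (use typed_fn[OF t_res_bot.hyps(2)] t_res_bot.hyps(1) in auto)
  then show ?case using s g by auto
next
  case (t_split T T1 T2 \<Gamma> w P)
  note sp = split_props[OF t_split.hyps(1)]
  have N: "\<forall>x\<in>#{#(w, T1), (w, T2)#}. fst x = w \<and> \<not> isU0 (snd x) \<and> ar (snd x) = ar T" using sp by auto
  have "Good ({#(w, T1), (w, T2)#} + \<Gamma>)"
    by (rule Good_replace[of w T]) (use t_split.prems N in auto)
  moreover have "fits \<rho> ({#(w, T1), (w, T2)#} + \<Gamma>)"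
    by (rule fits_replace[of _ w T]) (use t_split.prems N in auto)
  ultimately obtain \<rho>' where "sim ({#(w, T1), (w, T2)#} + \<Gamma>) \<rho>' \<rho>" "G \<rho>' P"
    using t_split.IH by (auto simp: add.commute)
  moreover then have "sim (add_mset (w, T) \<Gamma>) \<rho>' \<rho>" using sim_replace N by blast
  ultimately show ?case by auto
next
  case (t_weak \<Gamma> P w T)
  have "Good \<Gamma>" using Good_mono t_weak.prems(1) by blast
  moreover have "fits \<rho> \<Gamma>" by (rule fits_mono[OF t_weak.prems(2)]) auto
  ultimately obtain \<rho>' where s: "sim \<Gamma> \<rho>' \<rho>" and g: "G \<rho>' P" using t_weak.IH by blast
  have "sim (\<Gamma> + {#(w, T)#}) \<rho>' \<rho>" using s by (rule sim_mono) auto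
  then show ?case using g by blast
next
  case (t_sub \<Gamma> w T2 P T1)
  note sp = le_props[OF t_sub.hyps(2)]
  have N: "\<forall>x\<in>#{#(w, T2)#}. fst x = w \<and> \<not> isU0 (snd x) \<and> ar (snd x) = ar T1" using sp by auto
  have "Good ({#(w, T2)#} + \<Gamma>)"
    by (rule Good_replace[of w T1]) (use t_sub.prems N in auto)
  moreover have "fits \<rho> ({#(w, T2)#} + \<Gamma>)"
    by (rule fits_replace[of _ w T1]) (use t_sub.prems N in auto)
  ultimately obtain \<rho>' where "sim ({#(w, T2)#} + \<Gamma>) \<rho>' \<rho>" "G \<rho>' P"
    using t_sub.IH by (auto simp: add.commute)
  moreover then have "sim (add_mset (w, T1) \<Gamma>) \<rho>' \<rho>" using sim_replace N by blast
  ultimately show ?case by auto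
next
  case (t_uq0 \<Gamma> w Ts2 P Ts1)
  have gG: "Good \<Gamma>" using Good_mono t_uq0.prems(1) by blast
  show ?case
  proof (cases "\<exists>c. w = SI (Nm c)")
    case True
    then obtain c where w: "w = SI (Nm c)" by blast
    have fr: "SI (Nm c) \<notin> subjects \<Gamma>"
      using Good_excl[of \<Gamma> "{#(w, Ch Ts1 (Uq 0))#}" c "Ch Ts1 (Uq 0)"] t_uq0.prems(1) w
      by (auto simp: isU0_def)
    define \<rho>0 where "\<rho>0 = \<rho>(c \<mapsto> (Top, length Ts2))"
    have "Good (\<Gamma> + {#(w, Ch Ts2 (Uq 0))#})"
      using Good_fresh[OF gG fr] w by simp
    moreover have "fits \<rho>0 (\<Gamma> + {#(w, Ch Ts2 (Uq 0))#})"
      using t_uq0.prems(2) fr w unfolding fits_def \<rho>0_def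
      by (force simp: subjects_def)
    ultimately obtain \<rho>' where s: "sim (\<Gamma> + {#(w, Ch Ts2 (Uq 0))#}) \<rho>' \<rho>0" and g: "G \<rho>' P"
      using t_uq0.IH by blast
    have "sim (\<Gamma> + {#(w, Ch Ts1 (Uq 0))#}) \<rho>' \<rho>"
      unfolding sim_def
    proof
      fix d
      show "\<rho>' d = \<rho> d \<or> (\<exists>T. (SI (Nm d), T) \<in># \<Gamma> + {#(w, Ch Ts1 (Uq 0))#} \<and> isU0 T) \<and> (\<exists>n. \<rho>' d = Some (Top, n))"
      proof (cases "d = c")
        case True
        then show ?thesis using s w unfolding sim_def \<rho>0_def by (force simp: isU0_def)
      next
        case False
        have "\<rho>' d = \<rho>0 d \<or> (\<exists>T. (SI (Nm d), T) \<in># \<Gamma> + {#(w, Ch Ts2 (Uq 0))#} \<and> isU0 T) \<and> (\<exists>n. \<rho>' d = Some (Top, n))"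
          using s unfolding sim_def by (rule spec)
        then show ?thesis using False w unfolding \<rho>0_def by auto
      qed
    qed
    then show ?thesis using g by blast
  next
    case False
    have "Good (\<Gamma> + {#(w, Ch Ts2 (Uq 0))#})"
      using gG False unfolding Good_def by auto
    moreover have "fits \<rho> (\<Gamma> + {#(w, Ch Ts2 (Uq 0))#})"
      using t_uq0.prems(2) False unfolding fits_def by auto
    ultimately obtain \<rho>' where s: "sim (\<Gamma> + {#(w, Ch Ts2 (Uq 0))#}) \<rho>' \<rho>" and g: "G \<rho>' P"
      using t_uq0.IH by blast
    have "sim (\<Gamma> + {#(w, Ch Ts1 (Uq 0))#}) \<rho>' \<rho>"
      using s False unfolding sim_def by auto
    then show ?thesis using g by blast
  qed
qed (fastforce intro: sim_refl)+

theorem mainTheorem2: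
  assumes "config \<sigma> P"
    and "ctyped \<Gamma> \<sigma> P"
  shows "\<not> err \<sigma> P"
proof
  assume e: "err \<sigma> P"
  from assms(2) have top: "\<And>c. SI (Nm c) \<in> subjects \<Gamma> \<Longrightarrow> \<sigma> c = Some Top"
    and ty: "\<Gamma> \<turnstile> P" and pe: "partial_env \<Gamma>" by (auto simp: ctyped_def)
  have uniq: "filter_mset (\<lambda>a. fst a = w) \<Gamma> = {#x#}" if "x \<in># \<Gamma>" "fst x = w" for x w
  proof -
    have "x \<in># filter_mset (\<lambda>a. fst a = w) \<Gamma>" using that by simp
    moreover have "size (filter_mset (\<lambda>a. fst a = w) \<Gamma>) \<le> 1" using pe by (simp add: partial_env_def)
    ultimately show ?thesis
    proof -
      assume a: "x \<in># filter_mset (\<lambda>a. fst a = w) \<Gamma>" and b: "size (filter_mset (\<lambda>a. fst a = w) \<Gamma>) \<le> 1"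
      obtain F where F: "filter_mset (\<lambda>a. fst a = w) \<Gamma> = add_mset x F" using multi_member_split[OF a] by blast
      then have "F = {#}" using b by simp
      then show ?thesis using F by simp
    qed
  qed
  have good: "Good \<Gamma>" unfolding Good_def using uniq by auto
  define \<rho> where "\<rho> c = (case \<sigma> c of None \<Rightarrow> None | Some s \<Rightarrow>
      Some (s, if \<exists>T. (SI (Nm c), T) \<in># \<Gamma> then ar (SOME T. (SI (Nm c), T) \<in># \<Gamma>) else 0))" for c
  have fit: "fits \<rho> \<Gamma>"
    unfolding fits_def
  proof (intro allI impI)
    fix c T assume m: "(SI (Nm c), T) \<in># \<Gamma>"
    then have "SI (Nm c) \<in> subjects \<Gamma>" by (force simp: subjects_def)
    then have s: "\<sigma> c = Some Top" by (rule top)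
    have "(SOME T. (SI (Nm c), T) \<in># \<Gamma>) = T"
    proof (rule some_equality)
      fix T' assume "(SI (Nm c), T') \<in># \<Gamma>"
      then have "(SI (Nm c), T') \<in># filter_mset (\<lambda>a. fst a = SI (Nm c)) \<Gamma>" by simp
      then have "(SI (Nm c), T') \<in># {#(SI (Nm c), T)#}" using uniq[OF m] by simp
      then show "T' = T" by simp
    qed (rule m)
    then show "\<rho> c = Some (Top, ar T)" using m s by (auto simp: \<rho>_def)
  qed
  obtain \<rho>' where sm: "sim \<Gamma> \<rho>' \<rho>" and g: "G \<rho>' P" using typed_G[OF ty good fit] by blast
  have "\<forall>c. map_option fst (\<rho>' c) = \<sigma> c"
  proof
    fix c
    show "map_option fst (\<rho>' c) = \<sigma> c"
    proof (cases "\<rho>' c = \<rho> c")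
      case True then show ?thesis by (auto simp: \<rho>_def split: option.splits)
    next
      case False
      then obtain T n where "(SI (Nm c), T) \<in># \<Gamma>" "\<rho>' c = Some (Top, n)" using sm by (auto simp: sim_def)
      moreover then have "\<sigma> c = Some Top" using top by (force simp: subjects_def)
      ultimately show ?thesis by simp
    qed
  qed
  then show False using err_G[OF e _ g] by blast
qed

end
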